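(* Let $n\ge2$ be even and $Q(x)=\sum_{i=1}^{n/2-1}Tr_1^n(x^{2^i+1})+Tr_1^{n/2}(x^{2^{n/2}+1})$ on $\mathbb{F}_{2^n}$. Then $Q$ is bent but not negabent.
   Context: $Tr_1^m(z)=z+z^2+\dots+z^{2^{m-1}}$; $Tr=Tr_1^n$. Fix a self-dual basis $\{\alpha_i\}$ of $\mathbb{F}_{2^n}$ over $\mathbb{F}_2$ ($Tr(\alpha_i\alpha_j)=\delta_{ij}$), identify $\mathbb{F}_{2^n}$ with $\mathbb{F}_2^n$ via coordinates, and let $wt(x)$ be the number of nonzero coordinates. For $g:\mathbb{F}_{2^n}\to\mathbb{F}_2$: $g$ is bent if $\left|\sum_x(-1)^{g(x)+Tr(\mu x)}\right|=2^{n/2}$ for all $\mu$; negabent if $\left|\sum_x(-1)^{g(x)+Tr(\mu x)}\mathrm{i}^{wt(x)}\right|=2^{n/2}$ for all $\mu$ ($\mathrm{i}=\sqrt{-1}$). *)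

theory Defs
  imports Complex_Main
begin

text \<open>The field F_{2^n} is modelled by a finite field type 'a with CARD('a) = 2^n.
  F_2 is identified with the prime subfield {0,1} of 'a.\<close>

definition trm :: "nat \<Rightarrow> 'a::field \<Rightarrow> 'a" where
  "trm m z = (\<Sum>k<m. z ^ (2 ^ k))"

definition sgn2 :: "'a::field \<Rightarrow> complex" where
  "sgn2 y = (if y = 0 then 1 else -1)"

definition is_basis :: "nat \<Rightarrow> (nat \<Rightarrow> 'a::field) \<Rightarrow> bool" where
  "is_basis n alpha \<longleftrightarrow>
     (\<forall>x::'a. \<exists>!c::nat \<Rightarrow> bool. (\<forall>i\<ge>n. \<not> c i) \<and>
        x = (\<Sum>i<n. if c i then alpha i else 0))"

definition self_dual_basis :: "nat \<Rightarrow> (nat \<Rightarrow> 'a::field) \<Rightarrow> bool" where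
  "self_dual_basis n alpha \<longleftrightarrow> is_basis n alpha \<and>
     (\<forall>i<n. \<forall>j<n. trm n (alpha i * alpha j) = (if i = j then 1 else 0))"

definition coords :: "nat \<Rightarrow> (nat \<Rightarrow> 'a::field) \<Rightarrow> 'a \<Rightarrow> nat \<Rightarrow> bool" where
  "coords n alpha x = (THE c. (\<forall>i\<ge>n. \<not> c i) \<and> x = (\<Sum>i<n. if c i then alpha i else 0))"

definition wt :: "nat \<Rightarrow> (nat \<Rightarrow> 'a::field) \<Rightarrow> 'a \<Rightarrow> nat" where
  "wt n alpha x = card {i. i < n \<and> coords n alpha x i}"

definition boolean_fun :: "('a::field \<Rightarrow> 'a) \<Rightarrow> bool" where
  "boolean_fun g \<longleftrightarrow> (\<forall>x. g x = 0 \<or> g x = 1)"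

definition bent :: "nat \<Rightarrow> ('a::{field,finite} \<Rightarrow> 'a) \<Rightarrow> bool" where
  "bent n g \<longleftrightarrow> boolean_fun g \<and>
     (\<forall>mu::'a. cmod (\<Sum>x\<in>UNIV. sgn2 (g x + trm n (mu * x))) = 2 powr (real n / 2))"

definition negabent :: "nat \<Rightarrow> (nat \<Rightarrow> 'a::{field,finite}) \<Rightarrow> ('a \<Rightarrow> 'a) \<Rightarrow> bool" where
  "negabent n alpha g \<longleftrightarrow> boolean_fun g \<and>
     (\<forall>mu::'a. cmod (\<Sum>x\<in>UNIV. sgn2 (g x + trm n (mu * x)) * \<i> ^ wt n alpha x)
                 = 2 powr (real n / 2))"

definition Qfun :: "nat \<Rightarrow> 'a::field \<Rightarrow> 'a" where
  "Qfun n x = (\<Sum>i\<in>{1..n div 2 - 1}. trm n (x ^ (2 ^ i + 1)))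
              + trm (n div 2) (x ^ (2 ^ (n div 2) + 1))"

end

theory Submission
  imports Defs
begin


locale qs =
  fixes n :: nat and alpha :: "nat \<Rightarrow> 'a::{field,finite}"
  assumes ev: "even n" and n2: "n \<ge> 2" and cardU: "card (UNIV :: 'a set) = 2 ^ n"
    and sdb: "self_dual_basis n alpha"
begin

abbreviation Tr :: "'a \<Rightarrow> 'a" where "Tr \<equiv> trm n"

lemma fermat: "(x::'a) ^ (2 ^ n) = x"
proof (cases "x = 0")
  case True then show ?thesis using n2 by simp
next
  case False
  let ?U = "UNIV - {0::'a}"
  have bij: "bij_betw ((*) x) ?U ?U"
    unfolding bij_betw_def inj_on_def
  proof (intro conjI ballI impI)
    show "(*) x ` ?U = ?U"
    proof
      show "?U \<subseteq> (*) x ` ?U"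
      proof
        fix z assume "z \<in> ?U"
        then have "z = x * (z / x)" "z / x \<in> ?U" using False by auto
        then show "z \<in> (*) x ` ?U" by blast
      qed
    qed (use False in auto)
  qed (use False in auto)
  have "(\<Prod>y\<in>?U. x * y) = (\<Prod>y\<in>?U. y)"
    using prod.reindex_bij_betw[OF bij, of id] by simp
  moreover have "(\<Prod>y\<in>?U. x * y) = x ^ card ?U * (\<Prod>y\<in>?U. y)"
    by (simp add: prod.distrib)
  moreover have "(\<Prod>y\<in>?U. y) \<noteq> 0" by simp
  ultimately have "x ^ card ?U = 1" by simp
  moreover have "card ?U = 2 ^ n - 1" using cardU by (simp add: card_Diff_singleton)
  ultimately have "x ^ (2^n - 1) = 1" by simp
  then have "x * x ^ (2^n - 1) = x" by simp
  moreover have "Suc (2^n - 1) = 2^n" by simp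
  ultimately show ?thesis by (metis power_Suc)
qed

lemma two0: "(1::'a) + 1 = 0"
proof -
  have "((-1)::'a) ^ (2^n) = -1" by (rule fermat)
  moreover have "even ((2::nat)^n)" using n2 by simp
  ultimately have "(-1::'a) = 1" by simp
  then show ?thesis by (metis add.right_inverse)
qed

lemma neg_eq[simp]: "- (x::'a) = x"
proof -
  have "x + x = x * (1 + 1)" by (simp add: algebra_simps)
  then have "x + x = 0" using two0 by simp
  then show ?thesis by (metis add.commute add_eq_0_iff2 eq_neg_iff_add_eq_0)
qed

lemma add_self[simp]: "(x::'a) + x = 0"
  by (metis add.right_inverse neg_eq)

lemma minus_eq_plus: "(x::'a) - y = x + y"
  by (metis diff_conv_add_uminus neg_eq)

lemma frob2: "((x::'a) + y) ^ 2 = x ^ 2 + y ^ 2"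
proof -
  have "(x + y) ^ 2 = x^2 + y^2 + (x*y + x*y)" by (simp add: power2_eq_square algebra_simps del: add_self)
  then show ?thesis by simp
qed

lemma frob: "((x::'a) + y) ^ (2^k) = x ^ (2^k) + y ^ (2^k)"
proof (induction k)
  case 0 then show ?case by simp
next
  case (Suc k)
  have "(x + y) ^ (2^Suc k) = ((x+y)^(2^k))^2" by (simp add: power_mult[symmetric] mult.commute)
  also have "\<dots> = (x ^ (2^k))^2 + (y^(2^k))^2" using Suc frob2 by simp
  also have "\<dots> = x ^ (2^Suc k) + y ^ (2^Suc k)" by (simp add: power_mult[symmetric] mult.commute)
  finally show ?case .
qed

lemma frob_sum: "(\<Sum>i\<in>A. (f i::'a)) ^ (2^k) = (\<Sum>i\<in>A. f i ^ (2^k))"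
  by (induction A rule: infinite_finite_induct) (auto simp: frob)

lemma trm_add: "trm m ((x::'a) + y) = trm m x + trm m y"
  by (simp add: trm_def frob sum.distrib)

lemma trm_0[simp]: "trm m (0::'a) = 0"
  by (simp add: trm_def power_0_left)

lemma trm_sum: "trm m (\<Sum>i\<in>A. (f i::'a)) = (\<Sum>i\<in>A. trm m (f i))"
  by (induction A rule: infinite_finite_induct) (auto simp: trm_add)

lemma Tr_sq: "Tr ((y::'a) ^ 2) = Tr y"
proof -
  have "Tr (y^2) = (\<Sum>k<n. y ^ (2^Suc k))"
    by (simp add: trm_def power_mult[symmetric] mult.commute)
  moreover have "(\<Sum>k<Suc n. y ^ (2^k)) = y + (\<Sum>k<n. y ^ (2^Suc k))"
    unfolding sum.lessThan_Suc_shift by simp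
  moreover have "(\<Sum>k<Suc n. y ^ (2^k)) = Tr y + y"
    by (simp add: trm_def fermat)
  ultimately show ?thesis by (metis add.commute add_right_cancel)
qed

lemma Tr_sq2: "(Tr (y::'a)) ^ 2 = Tr y"
  using Tr_sq[of y] frob_sum[of "\<lambda>k. y ^ (2^k)" "{..<n}" 1]
  by (simp add: trm_def power_mult[symmetric] mult.commute)

definition F2 :: "'a \<Rightarrow> bool" where "F2 u \<longleftrightarrow> u = 0 \<or> u = 1"

lemma F2_sq: "F2 u \<longleftrightarrow> u ^ 2 = u"
proof
  assume "u^2 = u"
  then have "u * (u - 1) = 0" by (simp add: power2_eq_square algebra_simps)
  then show "F2 u" by (auto simp: F2_def)
qed (auto simp: F2_def)

lemma F2_Tr: "F2 (Tr y)" using Tr_sq2 F2_sq by blast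

lemma Tr_pow: "Tr ((y::'a) ^ (2^j)) = Tr y"
proof (induction j)
  case (Suc j)
  have "y ^ (2^Suc j) = (y^(2^j))^2" by (simp add: power_mult[symmetric] mult.commute)
  then show ?case using Suc Tr_sq by simp
qed simp

lemma F2_pow: "F2 c \<Longrightarrow> c ^ (2^k) = c"
  by (auto simp: F2_def)

lemma Tr_scal: "F2 c \<Longrightarrow> Tr (c * y) = c * Tr y"
  by (simp add: trm_def power_mult_distrib F2_pow sum_distrib_left)

lemma of_nat_even: "even k \<Longrightarrow> (of_nat k :: 'a) = 0"
  by (auto elim!: evenE simp: mult_2)

lemma Tr_1: "Tr (1::'a) = 0"
  by (simp add: trm_def of_nat_even ev)

end



lemma sum_halves:
  fixes f :: "nat \<Rightarrow> 'b::comm_monoid_add"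
  assumes "m \<ge> 1"
  shows "(\<Sum>k<m+m. f k) = f 0 + f m + (\<Sum>i\<in>{1..m-1}. f i + f (m+m-i))"
proof -
  have "{..<m+m} = {..<m} \<union> {m..<m+m}" by auto
  then have 1: "(\<Sum>k<m+m. f k) = (\<Sum>k<m. f k) + (\<Sum>k\<in>{m..<m+m}. f k)"
    by (metis sum.union_disjoint finite_lessThan finite_atLeastLessThan ivl_disj_int_one(2) lessThan_atLeast0)
  have "{..<m} = insert 0 {1..m-1}" using assms by auto
  then have 2: "(\<Sum>k<m. f k) = f 0 + (\<Sum>k\<in>{1..m-1}. f k)" by simp
  have "{m..<m+m} = insert m {m+1..<m+m}" using assms by auto
  then have 3: "(\<Sum>k\<in>{m..<m+m}. f k) = f m + (\<Sum>k\<in>{m+1..<m+m}. f k)" by simp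
  have 4: "(\<Sum>k\<in>{m+1..<m+m}. f k) = (\<Sum>i\<in>{1..m-1}. f (m+m-i))"
    by (rule sum.reindex_bij_witness[of _ "\<lambda>i. m+m-i" "\<lambda>k. m+m-k"]) auto
  show ?thesis unfolding 1 2 3 4 by (simp add: sum.distrib algebra_simps)
qed

lemma sum_concat:
  fixes f :: "nat \<Rightarrow> 'b::comm_monoid_add"
  shows "(\<Sum>k<a+b. f k) = (\<Sum>k<a. f k) + (\<Sum>k<b. f (a+k))"
  by (induction b) (simp_all add: algebra_simps)

context qs begin

abbreviation m :: nat where "m \<equiv> n div 2"

lemma two_eq0[simp]: "(2::'a) = 0" by (metis one_add_one two0)

lemma n_mm: "n = m + m" using ev by auto
lemma m1: "m \<ge> 1" using n2 by auto

lemma pow_split: "((x::'a)+a)^(2^i+1) = x^(2^i+1) + a^(2^i+1) + (x^(2^i)*a + a^(2^i)*x)"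
  by (simp add: frob algebra_simps)

lemma Tr_swap: "i \<le> n \<Longrightarrow> Tr ((x::'a)^(2^i) * a) = Tr (x * a^(2^(n-i)))"
proof -
  assume "i \<le> n"
  then have "(2::nat)^(n-i) * 2^i = 2^n" by (simp add: power_add[symmetric])
  then have "(x * a^(2^(n-i)))^(2^i) = x^(2^i) * a"
    by (simp add: power_mult_distrib power_mult[symmetric] fermat)
  then show ?thesis by (metis Tr_pow)
qed

lemma trm_half: "trm m (z::'a) + trm m (z^(2^m)) = Tr z"
proof -
  have "trm m (z^(2^m)) = (\<Sum>k<m. z^(2^(m+k)))"
    by (simp add: trm_def power_mult[symmetric] power_add)
  then show ?thesis using sum_concat[of "\<lambda>k. z^(2^k)" m m] n_mm by (simp add: trm_def)
qed

lemma trm_m_add: "trm m ((x::'a)+a) = trm m x + trm m a" by (rule trm_add)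

lemma half_term: "trm m (((x::'a)+a)^(2^m+1)) = trm m (x^(2^m+1)) + trm m (a^(2^m+1)) + Tr (x * a^(2^m))"
proof -
  let ?z = "a^(2^m) * x"
  have "?z^(2^m) = a^(2^m*2^m) * x^(2^m)" by (simp add: power_mult_distrib power_mult)
  also have "(2::nat)^m*2^m = 2^n" using n_mm by (simp add: power_add[symmetric])
  finally have z: "?z^(2^m) = x^(2^m) * a" by (simp add: fermat mult.commute)
  have "trm m (x^(2^m)*a + a^(2^m)*x) = Tr ?z" using trm_half[of ?z] z by (simp add: trm_add add.commute)
  then show ?thesis unfolding pow_split trm_add by (simp add: mult.commute del: power_Suc)
qed

lemma Q_polar: "Qfun n ((x::'a)+a) = Qfun n x + Qfun n a + Tr (x * (Tr a + a))"
proof -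
  have i: "Tr (((x::'a)+a)^(2^i+1)) = Tr (x^(2^i+1)) + Tr (a^(2^i+1)) + Tr (x * (a^(2^(n-i)) + a^(2^i)))"
    if "i \<le> n" for i
    using Tr_swap[OF that, of x a] unfolding pow_split trm_add distrib_left by (simp add: ac_simps del: power_Suc)
  have s: "(\<Sum>i\<in>{1..m-1}. Tr ((x+a)^(2^i+1))) = (\<Sum>i\<in>{1..m-1}. Tr (x^(2^i+1))) + (\<Sum>i\<in>{1..m-1}. Tr (a^(2^i+1)))
      + Tr (x * (\<Sum>i\<in>{1..m-1}. a^(2^(n-i)) + a^(2^i)))"
  proof -
    have "(\<Sum>i\<in>{1..m-1}. Tr ((x+a)^(2^i+1))) = (\<Sum>i\<in>{1..m-1}. Tr (x^(2^i+1)) + Tr (a^(2^i+1)) + Tr (x * (a^(2^(n-i)) + a^(2^i))))"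
      by (rule sum.cong) (use i n_mm in auto)
    also have "\<dots> = (\<Sum>i\<in>{1..m-1}. Tr (x^(2^i+1))) + (\<Sum>i\<in>{1..m-1}. Tr (a^(2^i+1))) + Tr (\<Sum>i\<in>{1..m-1}. x * (a^(2^(n-i)) + a^(2^i)))"
      by (simp only: sum.distrib trm_sum)
    finally show ?thesis by (simp only: sum_distrib_left)
  qed
  have R: "(\<Sum>i\<in>{1..m-1}. a^(2^(n-i)) + a^(2^i)) + a^(2^m) = Tr a + a"
  proof -
    have "Tr a = a + a^(2^m) + (\<Sum>i\<in>{1..m-1}. a^(2^i) + a^(2^(n-i)))"
      using sum_halves[OF m1, of "\<lambda>k. a^(2^k)"] n_mm by (simp add: trm_def)
    then have "Tr a + a = a^(2^m) + (\<Sum>i\<in>{1..m-1}. a^(2^i) + a^(2^(n-i)))"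
      by (simp add: algebra_simps)
    then show ?thesis by (simp add: algebra_simps)
  qed
  have "Qfun n (x+a) = Qfun n x + Qfun n a + (Tr (x * (\<Sum>i\<in>{1..m-1}. a^(2^(n-i)) + a^(2^i))) + Tr (x * a^(2^m)))"
    unfolding Qfun_def s half_term by (simp add: algebra_simps)
  also have "Tr (x * (\<Sum>i\<in>{1..m-1}. a^(2^(n-i)) + a^(2^i))) + Tr (x * a^(2^m)) = Tr (x * (Tr a + a))"
    using R by (metis distrib_left trm_add)
  finally show ?thesis .
qed

end



context qs begin

lemma add_self2: "(x::'a) + (x + y) = y" by (metis add.assoc add_self add_0)
lemma F2_add: "F2 u \<Longrightarrow> F2 v \<Longrightarrow> F2 (u+v)" by (auto simp: F2_def)
lemma F2_mult: "F2 u \<Longrightarrow> F2 v \<Longrightarrow> F2 (u*v)" by (auto simp: F2_def)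
lemma F2_0: "F2 0" by (simp add: F2_def)
lemma F2_sum: "(\<And>i. i \<in> A \<Longrightarrow> F2 (f i)) \<Longrightarrow> F2 (\<Sum>i\<in>A. f i)"
  by (induction A rule: infinite_finite_induct) (auto simp: F2_add F2_0)
lemma one_ne0: "(1::'a) \<noteq> 0" by simp

lemma sgn2_add: "F2 u \<Longrightarrow> F2 v \<Longrightarrow> sgn2 (u+v) = sgn2 u * sgn2 (v::'a)"
  by (auto simp: F2_def sgn2_def)
lemma sgn2_sq: "sgn2 (u::'a) * sgn2 u = 1" by (simp add: sgn2_def)
lemma sgn2_1: "sgn2 (1::'a) = -1" by (simp add: sgn2_def)
lemma sgn2_0: "sgn2 (0::'a) = 1" by (simp add: sgn2_def)

lemma trm_sq_gen: "(trm k (z::'a))^2 = trm k z + z + z^(2^k)"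
proof -
  have "(trm k z)^2 = (\<Sum>j<k. z ^ (2^Suc j))"
    using frob_sum[of "\<lambda>j. z ^ (2^j)" "{..<k}" 1]
    by (simp add: trm_def power_mult[symmetric] mult.commute)
  moreover have "(\<Sum>j<Suc k. z ^ (2^j)) = z + (\<Sum>j<k. z ^ (2^Suc j))"
    unfolding sum.lessThan_Suc_shift by simp
  moreover have "(\<Sum>j<Suc k. z ^ (2^j)) = trm k z + z^(2^k)"
    by (simp add: trm_def)
  ultimately have "z + (trm k z)^2 = trm k z + z^(2^k)" by simp
  then have "z + (trm k z)^2 + z = trm k z + z^(2^k) + z" by simp
  then show ?thesis by (simp add: algebra_simps)
qed

lemma Q_bool: "F2 (Qfun n (x::'a))"
proof -
  let ?N = "x^(2^m+1)"
  have "?N^(2^m) = x^(2^m*2^m) * x^(2^m)" by (simp add: power_mult_distrib power_mult)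
  also have "(2::nat)^m*2^m = 2^n" using n_mm by (simp add: power_add[symmetric])
  finally have N: "?N^(2^m) = ?N" by (simp add: fermat mult.commute)
  have "F2 (trm m ?N)" unfolding F2_sq using trm_sq_gen[of m ?N] N by simp
  moreover have "F2 (\<Sum>i\<in>{1..m-1}. Tr (x ^ (2 ^ i + 1)))" by (rule F2_sum) (rule F2_Tr)
  ultimately show ?thesis unfolding Qfun_def by (rule F2_add[rotated])
qed

lemma Q0: "Qfun n (0::'a) = 0"
  by (simp add: Qfun_def power_0_left)

lemma char_sum:
  fixes psi :: "'a \<Rightarrow> complex"
  assumes mult: "\<And>x y. psi (x+y) = psi x * psi y" and a: "psi a \<noteq> 1"
  shows "(\<Sum>x\<in>UNIV. psi x) = 0"
proof -
  have bij: "bij_betw (\<lambda>x. x + a) UNIV UNIV"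
    by (rule bij_plus_right)
  have "(\<Sum>x\<in>UNIV. psi x) = (\<Sum>x\<in>UNIV. psi (x+a))"
    using sum.reindex_bij_betw[OF bij, of psi] by simp
  also have "\<dots> = psi a * (\<Sum>x\<in>UNIV. psi x)" by (simp add: mult sum_distrib_left mult.commute)
  finally have "(1 - psi a) * (\<Sum>x\<in>UNIV. psi x) = 0" by (simp add: algebra_simps)
  with a show ?thesis by simp
qed

lemma sdb_Tr: "i < n \<Longrightarrow> j < n \<Longrightarrow> Tr (alpha i * alpha j) = (if i = j then 1 else 0)"
  using sdb unfolding self_dual_basis_def by blast

lemma ortho: "(\<Sum>v\<in>UNIV. sgn2 (Tr (v * (z::'a)))) = (if z = 0 then 2^n else 0)"
proof (cases "z = 0")
  case True then show ?thesis using cardU by (simp add: sgn2_def)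
next
  case False
  let ?a = "alpha 0 * alpha 0 / z"
  have "Tr (?a * z) = 1" using sdb_Tr[of 0 0] n2 False by simp
  then have "sgn2 (Tr (?a * z)) \<noteq> 1" by (simp add: sgn2_def)
  moreover have "sgn2 (Tr ((x+y)*z)) = sgn2 (Tr (x*z)) * sgn2 (Tr (y*z))" for x y
    by (simp add: distrib_right trm_add sgn2_add F2_Tr)
  ultimately have "(\<Sum>v\<in>UNIV. sgn2 (Tr (v * z))) = 0"
    using char_sum[of "\<lambda>v. sgn2 (Tr (v*z))" ?a] by blast
  then show ?thesis using False by simp
qed

definition W :: "'a \<Rightarrow> complex" where
  "W mu = (\<Sum>x\<in>UNIV. sgn2 (Qfun n x + Tr (mu * x)))"

lemma W_sq: "W mu * W mu = 2^n"
proof -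
  let ?g = "\<lambda>x. sgn2 (Qfun n x + Tr (mu * x))"
  have comb: "?g x * ?g (x+a) = ?g a * sgn2 (Tr ((Tr a + a) * x))" for x a
  proof -
    have "Qfun n (x+a) + Tr (mu*(x+a)) = (Qfun n x + Tr (mu*x)) + ((Qfun n a + Tr (mu*a)) + Tr ((Tr a + a) * x))"
      by (simp only: Q_polar distrib_left distrib_right trm_add) (simp add: ac_simps)
    then have "?g (x+a) = ?g x * (?g a * sgn2 (Tr ((Tr a + a) * x)))"
      by (simp add: sgn2_add F2_add F2_Tr Q_bool)
    then show ?thesis by (simp add: sgn2_sq mult.assoc[symmetric])
  qed
  have "W mu * W mu = (\<Sum>x\<in>UNIV. \<Sum>y\<in>UNIV. ?g x * ?g y)"
    unfolding W_def by (simp add: sum_product)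
  also have "\<dots> = (\<Sum>x\<in>UNIV. \<Sum>a\<in>UNIV. ?g x * ?g (x+a))"
  proof (rule sum.cong[OF refl])
    fix x :: 'a
    have bij: "bij_betw (\<lambda>a. x + a) UNIV UNIV"
      by (rule bij_betw_byWitness[where f'="\<lambda>y. x + y"]) (auto simp: add_self2)
    show "(\<Sum>y\<in>UNIV. ?g x * ?g y) = (\<Sum>a\<in>UNIV. ?g x * ?g (x+a))"
      using sum.reindex_bij_betw[OF bij, of "\<lambda>y. ?g x * ?g y"] by simp
  qed
  also have "\<dots> = (\<Sum>a\<in>UNIV. ?g a * (\<Sum>x\<in>UNIV. sgn2 (Tr ((Tr a + a) * x))))"
    by (subst sum.swap) (simp add: comb sum_distrib_left)
  also have "\<dots> = (\<Sum>a\<in>UNIV. if a = (0::'a) then 2^n else 0)"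
  proof (rule sum.cong[OF refl])
    fix a :: 'a
    have o: "(\<Sum>x\<in>UNIV. sgn2 (Tr ((Tr a + a) * x))) = (if Tr a + a = 0 then 2^n else 0)"
      using ortho[of "Tr a + a"] by (simp add: mult.commute)
    have "Tr a + a = 0 \<longleftrightarrow> a = 0"
    proof
      assume h: "Tr a + a = 0"
      then have "a = Tr a" by (metis add_self add_right_cancel add.commute)
      then have "a = 0 \<or> a = 1" using F2_Tr unfolding F2_def by metis
      then show "a = 0" using h Tr_1 by auto
    qed simp
    then show "?g a * (\<Sum>x\<in>UNIV. sgn2 (Tr ((Tr a + a) * x))) = (if a = 0 then 2^n else 0)"
      using o by (simp add: Q0 sgn2_0)
  qed
  also have "\<dots> = 2^n" by simp
  finally show ?thesis .
qed

lemma bent_Q: "bent n (Qfun n :: 'a \<Rightarrow> 'a)"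
  unfolding bent_def
proof (intro conjI allI)
  show "boolean_fun (Qfun n :: 'a \<Rightarrow> 'a)" using Q_bool by (simp add: boolean_fun_def F2_def)
  fix mu :: 'a
  have "cmod (W mu) * cmod (W mu) = cmod (W mu * W mu)" by (simp add: norm_mult)
  also have "\<dots> = cmod ((2::complex)^n)" by (simp only: W_sq)
  also have "\<dots> = 2^n" by (simp add: norm_power)
  finally have 1: "cmod (W mu) * cmod (W mu) = 2^n" .
  have "(2 powr (real n / 2)) * (2 powr (real n / 2)) = 2 powr (real n / 2 + real n / 2)"
    by (simp only: powr_add)
  also have "real n / 2 + real n / 2 = real n" by simp
  also have "2 powr (real n) = (2::real)^n" by (simp add: powr_realpow)
  finally have 2: "(2 powr (real n / 2)) * (2 powr (real n / 2)) = (2::real)^n" .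
  have "cmod (W mu) = 2 powr (real n / 2)"
    using 1 2 by (metis norm_ge_zero powr_ge_zero power2_eq_imp_eq power2_eq_square)
  then show "cmod (\<Sum>x\<in>UNIV. sgn2 (Qfun n x + Tr (mu * x))) = 2 powr (real n / 2)"
    by (simp add: W_def)
qed

end



context qs begin

lemma basis_ex: "\<exists>c. (\<forall>i\<ge>n. \<not> c i) \<and> x = (\<Sum>i<n. if c i then alpha i else (0::'a))"
  using sdb unfolding self_dual_basis_def is_basis_def by blast

lemma Tr_alpha_expand:
  assumes "x = (\<Sum>i<n. if c i then alpha i else (0::'a))" "j < n"
  shows "Tr (alpha j * x) = (if c j then 1 else 0)"
proof -
  have "Tr (alpha j * x) = (\<Sum>i<n. if c i then Tr (alpha j * alpha i) else 0)"
    unfolding assms(1) sum_distrib_left trm_sum by (rule sum.cong) auto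
  also have "\<dots> = (\<Sum>i<n. if i = j then (if c j then 1 else 0) else 0)"
    by (rule sum.cong) (use assms(2) sdb_Tr in auto)
  also have "\<dots> = (if c j then 1 else 0)" using assms(2) by simp
  finally show ?thesis .
qed

lemma expand: "x = (\<Sum>i<n. if Tr (alpha i * x) = 1 then alpha i else (0::'a))"
proof -
  obtain c where c: "\<forall>i\<ge>n. \<not> c i" "x = (\<Sum>i<n. if c i then alpha i else (0::'a))"
    using basis_ex by blast
  have "(\<Sum>i<n. if Tr (alpha i * x) = 1 then alpha i else (0::'a)) = (\<Sum>i<n. if c i then alpha i else 0)"
    by (rule sum.cong) (use Tr_alpha_expand[OF c(2)] in auto)
  then show ?thesis using c(2) by simp
qed

lemma coords_eq: "coords n alpha x = (\<lambda>i. i < n \<and> Tr (alpha i * x) = 1)"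
proof -
  obtain c where c: "\<forall>i\<ge>n. \<not> c i" "x = (\<Sum>i<n. if c i then alpha i else (0::'a))"
    using basis_ex by blast
  have uniq: "\<exists>!c. (\<forall>i\<ge>n. \<not> c i) \<and> x = (\<Sum>i<n. if c i then alpha i else (0::'a))"
    using sdb unfolding self_dual_basis_def is_basis_def by blast
  have ceq: "c = (\<lambda>i. i < n \<and> Tr (alpha i * x) = 1)"
  proof
    fix i show "c i = (i < n \<and> Tr (alpha i * x) = 1)"
      using c Tr_alpha_expand[OF c(2), of i] by (cases "i < n") auto
  qed
  have "coords n alpha x = c"
    unfolding coords_def by (rule the1_equality[OF uniq]) (use c in auto)
  then show ?thesis using ceq by simp
qed

lemma wt_eq: "wt n alpha x = card {i. i < n \<and> Tr (alpha i * x) = 1}"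
  by (simp add: wt_def coords_eq)

lemma Tr_prod_coords: "Tr (x * a) = (\<Sum>j<n. Tr (alpha j * x) * Tr (alpha j * (a::'a)))"
proof -
  have "Tr (x * a) = Tr (x * (\<Sum>i<n. if Tr (alpha i * a) = 1 then alpha i else (0::'a)))"
    using expand[of a] by simp
  also have "\<dots> = (\<Sum>j<n. if Tr (alpha j * a) = 1 then Tr (alpha j * x) else 0)"
    unfolding sum_distrib_left trm_sum by (rule sum.cong) (auto simp: mult.commute)
  also have "\<dots> = (\<Sum>j<n. Tr (alpha j * x) * Tr (alpha j * (a::'a)))"
    by (rule sum.cong) (use F2_Tr[of "alpha _ * a"] in \<open>auto simp: F2_def\<close>)
  finally show ?thesis .
qed

lemma Tr_alpha: "j < n \<Longrightarrow> Tr (alpha j) = 1"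
  using sdb_Tr[of j j] Tr_sq[of "alpha j"] by (simp add: power2_eq_square)

lemma sgn2_sum: "(\<And>i. i \<in> A \<Longrightarrow> F2 (f i)) \<Longrightarrow> sgn2 (\<Sum>i\<in>A. (f i::'a)) = (\<Prod>i\<in>A. sgn2 (f i))"
proof (induction A rule: infinite_finite_induct)
  case (insert x F)
  then show ?case by (simp add: sgn2_add F2_sum)
qed (auto simp: sgn2_def)

definition iota :: "'a \<Rightarrow> complex" where "iota u = (if u = 0 then 1 else \<i>)"
definition kappa :: "'a \<Rightarrow> complex" where "kappa u = (if u = 0 then 1 else - \<i>)"

lemma iota_add: "F2 u \<Longrightarrow> F2 v \<Longrightarrow> iota (u+v) = iota u * iota v * sgn2 (u*v)"
  by (auto simp: F2_def iota_def sgn2_def)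
lemma kappa_add: "F2 u \<Longrightarrow> F2 v \<Longrightarrow> kappa (u+v) = kappa u * kappa v * sgn2 (u*v)"
  by (auto simp: F2_def kappa_def sgn2_def)
lemma iota_kappa: "iota u * kappa u = 1" by (simp add: iota_def kappa_def)
lemma iota_lin: "F2 u \<Longrightarrow> iota u = (1+\<i>)/2 + (1-\<i>)/2 * sgn2 u"
  by (auto simp: F2_def iota_def sgn2_def field_simps)

definition ip :: "'a \<Rightarrow> complex" where "ip x = (\<Prod>j<n. iota (Tr (alpha j * x)))"

lemma ip_wt: "\<i> ^ wt n alpha x = ip x"
proof -
  have "ip x = (\<Prod>j<n. if Tr (alpha j * x) = 1 then \<i> else 1)"
    unfolding ip_def by (rule prod.cong) (use F2_Tr in \<open>auto simp: iota_def F2_def\<close>)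
  also have "\<dots> = \<i> ^ card ({..<n} \<inter> {j. Tr (alpha j * x) = 1})"
    by (simp add: prod.If_cases)
  also have "{..<n} \<inter> {j. Tr (alpha j * x) = 1} = {i. i < n \<and> Tr (alpha i * x) = 1}" by auto
  finally show ?thesis by (simp add: wt_eq)
qed

lemma ip_add: "ip (x + a) = ip x * ip a * sgn2 (Tr (x * a))"
proof -
  have "ip (x + a) = (\<Prod>j<n. iota (Tr (alpha j * x)) * iota (Tr (alpha j * a)) * sgn2 (Tr (alpha j * x) * Tr (alpha j * a)))"
    unfolding ip_def by (rule prod.cong[OF refl]) (simp only: distrib_left trm_add iota_add[OF F2_Tr F2_Tr])
  also have "\<dots> = ip x * ip a * (\<Prod>j<n. sgn2 (Tr (alpha j * x) * Tr (alpha j * a)))"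
    by (simp only: ip_def prod.distrib)
  also have "(\<Prod>j<n. sgn2 (Tr (alpha j * x) * Tr (alpha j * a))) = sgn2 (Tr (x * a))"
    using sgn2_sum[of "{..<n}" "\<lambda>j. Tr (alpha j * x) * Tr (alpha j * a)"] Tr_prod_coords[of x a]
    by (simp add: F2_mult F2_Tr)
  finally show ?thesis .
qed

definition phi :: "'a \<Rightarrow> complex" where "phi x = sgn2 (Qfun n x) * ip x * kappa (Tr x)"

lemma phi_add: "phi (x + a) = phi x * phi a"
proof -
  have Q: "Qfun n (x+a) = Qfun n x + Qfun n a + (Tr x * Tr a + Tr (x * a))"
    using Q_polar[of x a] Tr_scal[OF F2_Tr, of a x]
    by (simp add: distrib_left distrib_right trm_add mult.commute)
  have sQ: "sgn2 (Qfun n (x+a)) = sgn2 (Qfun n x) * sgn2 (Qfun n a) * (sgn2 (Tr x * Tr a) * sgn2 (Tr (x * a)))"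
    unfolding Q by (simp add: sgn2_add F2_add F2_mult F2_Tr Q_bool)
  have sK: "kappa (Tr (x+a)) = kappa (Tr x) * kappa (Tr a) * sgn2 (Tr x * Tr a)"
    by (simp add: trm_add kappa_add F2_Tr)
  have "phi (x+a) = (sgn2 (Qfun n x) * ip x * kappa (Tr x)) * (sgn2 (Qfun n a) * ip a * kappa (Tr a))
      * ((sgn2 (Tr x * Tr a) * sgn2 (Tr x * Tr a)) * (sgn2 (Tr (x * a)) * sgn2 (Tr (x * a))))"
    unfolding phi_def sQ sK ip_add by (simp add: ac_simps)
  then show ?thesis by (simp add: sgn2_sq phi_def)
qed

lemma ip0: "ip 0 = 1" by (simp add: ip_def iota_def)
lemma phi0: "phi 0 = 1" by (simp add: phi_def ip0 Q0 sgn2_def kappa_def)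

definition S :: "'a \<Rightarrow> complex" where "S v = (\<Sum>x\<in>UNIV. phi x * sgn2 (Tr (v * x)))"

lemma S_vals: "S v = 0 \<or> S v = 2^n"
proof (cases "\<exists>a. phi a * sgn2 (Tr (v * a)) \<noteq> 1")
  case True
  then obtain a where a: "phi a * sgn2 (Tr (v * a)) \<noteq> 1" by blast
  have "S v = 0" unfolding S_def
  proof (rule char_sum[where psi="\<lambda>x. phi x * sgn2 (Tr (v*x))" and a=a])
    show "phi a * sgn2 (Tr (v * a)) \<noteq> 1" by (rule a)
    fix x y :: 'a
    show "phi (x + y) * sgn2 (Tr (v * (x + y))) = phi x * sgn2 (Tr (v * x)) * (phi y * sgn2 (Tr (v * y)))"
      by (simp add: phi_add distrib_left trm_add sgn2_add F2_Tr ac_simps)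
  qed
  then show ?thesis by simp
next
  case False
  then have "S v = (\<Sum>x\<in>(UNIV::'a set). 1)" unfolding S_def by (intro sum.cong) auto
  then show ?thesis using cardU by simp
qed

lemma S_exists: "\<exists>v. S v = 2^n"
proof -
  have "(\<Sum>v\<in>UNIV. S v) = (\<Sum>x\<in>UNIV. phi x * (\<Sum>v\<in>UNIV. sgn2 (Tr (v * x))))"
    unfolding S_def by (subst sum.swap) (simp add: sum_distrib_left)
  also have "\<dots> = (\<Sum>x\<in>UNIV. if x = (0::'a) then 2^n else 0)"
    by (rule sum.cong) (auto simp: ortho phi0)
  also have "\<dots> = 2^n" by simp
  finally have "(\<Sum>v\<in>UNIV. S v) \<noteq> 0" by simp
  then obtain v where "S v \<noteq> 0" by (meson sum.neutral)
  then show ?thesis using S_vals by blast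
qed

definition NH :: "'a \<Rightarrow> complex" where
  "NH mu = (\<Sum>x\<in>UNIV. sgn2 (Qfun n x + Tr (mu * x)) * \<i> ^ wt n alpha x)"

lemma NH_S: "NH mu = (1+\<i>)/2 * S mu + (1-\<i>)/2 * S (mu + 1)"
proof -
  have t: "sgn2 (Qfun n x + Tr (mu * x)) * \<i> ^ wt n alpha x
       = (1+\<i>)/2 * (phi x * sgn2 (Tr (mu * x))) + (1-\<i>)/2 * (phi x * sgn2 (Tr ((mu + 1) * x)))" for x
  proof -
    have "sgn2 (Qfun n x + Tr (mu * x)) * \<i> ^ wt n alpha x
        = sgn2 (Tr (mu * x)) * (sgn2 (Qfun n x) * ip x * kappa (Tr x)) * iota (Tr x)"
      by (simp add: ip_wt sgn2_add Q_bool F2_Tr mult.assoc mult.left_commute[of "kappa _"] iota_kappa[unfolded mult.commute[of "iota _"]] mult.commute[of "iota _" "kappa _"])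
    also have "\<dots> = sgn2 (Tr (mu * x)) * phi x * ((1+\<i>)/2 + (1-\<i>)/2 * sgn2 (Tr x))"
      by (simp add: phi_def iota_lin F2_Tr)
    also have "sgn2 (Tr ((mu + 1) * x)) = sgn2 (Tr (mu * x)) * sgn2 (Tr x)"
      by (simp add: distrib_right trm_add sgn2_add F2_Tr)
    ultimately show ?thesis by (simp add: algebra_simps)
  qed
  show ?thesis unfolding NH_def S_def t by (simp add: sum.distrib sum_distrib_left)
qed

lemma not_negabent: "\<not> negabent n alpha (Qfun n :: 'a \<Rightarrow> 'a)"
proof
  assume nb: "negabent n alpha (Qfun n :: 'a \<Rightarrow> 'a)"
  obtain v where v: "S v = 2^n" using S_exists by blast
  have eq: "cmod (NH v) = 2 powr (real n / 2)" using nb unfolding negabent_def NH_def by blast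
  have p2: "(2 powr (real n / 2)) ^ 2 = (2::real)^n"
  proof -
    have "(2 powr (real n / 2)) ^ 2 = 2 powr (real n / 2 + real n / 2)"
      by (simp only: powr_add power2_eq_square)
    also have "real n / 2 + real n / 2 = real n" by simp
    finally show ?thesis by (simp add: powr_realpow)
  qed
  have sq: "cmod (NH v) ^ 2 = 2^n" using eq p2 by simp
  define X :: real where "X = 2^n"
  have "(2::real)^2 \<le> 2^n" by (rule power_increasing) (use n2 in auto)
  then have X2: "X > 2" unfolding X_def by simp
  from S_vals[of "v+1"] show False
  proof
    assume "S (v+1) = 0"
    then have "NH v = complex_of_real (X/2) + \<i> * complex_of_real (X/2)"
      using v by (simp add: NH_S X_def field_simps)
    then have "cmod (NH v) ^ 2 = (X/2)^2 + (X/2)^2" by (simp add: cmod_power2)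
    with sq have "(X/2)^2 + (X/2)^2 = X" by (simp add: X_def)
    then have "X * (X - 2) = 0" by (simp add: power2_eq_square field_simps)
    with X2 show False by simp
  next
    assume "S (v+1) = 2^n"
    then have "NH v = complex_of_real X"
      using v by (simp add: NH_S X_def field_simps)
    then have "cmod (NH v) ^ 2 = X^2" by (simp add: cmod_power2)
    with sq have "X^2 = X" by (simp add: X_def)
    then have "X * (X - 1) = 0" by (simp add: power2_eq_square field_simps)
    with X2 show False by simp
  qed
qed

end


theorem corollary3:
  fixes n :: nat and alpha :: "nat \<Rightarrow> 'a::{field,finite}"
  assumes "even n" and "n \<ge> 2" and "card (UNIV :: 'a set) = 2 ^ n"
    and "self_dual_basis n alpha"
  shows "bent n (Qfun n :: 'a \<Rightarrow> 'a) \<and> \<not> negabent n alpha (Qfun n :: 'a \<Rightarrow> 'a)"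
proof -
  interpret qs n alpha by unfold_locales (use assms in auto)
  show ?thesis using bent_Q not_negabent by blast
qed

end
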